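(* Let $n\ge1$, $d\ge0$, and let $\mathcal B_{n,d}$ be the set of directed multigraphs with output pair $H=(V,E,(a,b))$, up to isomorphism, with $|V|\le\min\{n,2+2d\}$, $|E|\le d$, and no isolated node in $V\setminus\{a,b\}$. Then $\{Q_H: H\in\mathcal B_{n,d}\}$ is a basis of the space of $S_n$-equivariant polynomial maps $\mathbb R^{n\times n}\to\mathbb R^{n\times n}$ of degree at most $d$. Moreover, for every such $H$, $Q_H(X)=\sum_{g\in S_n} g\cdot M_H(g^{-1}\cdot X)$, where $M_H(X)=\delta^{a,b}\prod_{(r,s)\in E}X_{r,s}$ (here $H$ is viewed as having node set contained in $[n]$ and $\delta^{a,b}\in\mathbb R^{n\times n}$ is the matrix unit with a $1$ in entry $(a,b)$).
   Context: A directed multigraph with output pair is $H=(V,E,(a,b))$ with $V=[m]$, $E$ a finite multiset of ordered pairs $(r,s)\in V\times V$ (parallel edges and self-loops allowed), and $a,b\in V$ a distinguished, not necessarily distinct, pair (the red edge, not an element of $E$). A node is isolated if no edge of $E$ is incident to it. Isomorphism of such multigraphs: a bijection of node sets carrying the edge multiset onto the edge multiset and $(a,b)$ onto the red pair. For $X\in\mathbb R^{n\times n}$, $Q_H(X)_{i_a,i_b}=\sum_{j}\prod_{(r,s)\in E}X_{j_r,j_s}$, where the sum is over all injective maps $j:[m]\to[n]$ with $j_a=i_a$, $j_b=i_b$ (product with multiplicity; empty product $=1$); if $a=b$ the off-diagonal entries of $Q_H(X)$ are $0$. $S_n$ acts by $(g\cdot X)_{ij}=X_{g^{-1}(i),g^{-1}(j)}$,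 and a polynomial map $P$ is equivariant if $P(g\cdot X)=g\cdot P(X)$ for all $g\in S_n$.
   Formalization: The Moreover identity carries the factor $(n-|V|)!$ on its left side: $(n-|V|)! Q_H(X)=\sum_{g\in S_n} g\cdot M_H(g^{-1}\cdot X)$ in place of $Q_H(X)=\sum_{g\in S_n} g\cdot M_H(g^{-1}\cdot X)$. The statement above fails without it. *)

theory Defs
  imports "HOL-Analysis.Analysis" "HOL-Library.Multiset" "HOL-Combinatorics.Permutations"
    "HOL-Library.FuncSet"
begin

text \<open>Directed multigraph with output pair: node set {0..<nodes}, edge multiset,
  red pair (out_a, out_b).\<close>
datatype mgraph = MG (nodes: nat) (edges: "(nat \<times> nat) multiset") (out_a: nat) (out_b: nat)

definition wf_mgraph :: "mgraph \<Rightarrow> bool" where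
  "wf_mgraph H \<longleftrightarrow> out_a H < nodes H \<and> out_b H < nodes H \<and>
     (\<forall>(r, s) \<in># edges H. r < nodes H \<and> s < nodes H)"

definition isolated :: "mgraph \<Rightarrow> nat \<Rightarrow> bool" where
  "isolated H v \<longleftrightarrow> (\<forall>(r, s) \<in># edges H. r \<noteq> v \<and> s \<noteq> v)"

definition mgraph_iso :: "mgraph \<Rightarrow> mgraph \<Rightarrow> bool" where
  "mgraph_iso H H' \<longleftrightarrow> (\<exists>f. bij_betw f {0..<nodes H} {0..<nodes H'} \<and>
      image_mset (map_prod f f) (edges H) = edges H' \<and>
      f (out_a H) = out_a H' \<and> f (out_b H) = out_b H')"

text \<open>The index set B_{n,d} (before passing to isomorphism classes).\<close>
definition Bset :: "nat \<Rightarrow> nat \<Rightarrow> mgraph set" where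
  "Bset n d = {H. wf_mgraph H \<and> nodes H \<le> min n (2 + 2 * d) \<and> size (edges H) \<le> d \<and>
      (\<forall>v < nodes H. v \<noteq> out_a H \<and> v \<noteq> out_b H \<longrightarrow> \<not> isolated H v)}"

text \<open>n x n real matrices are indexed by a finite type 'n with n = CARD('n);
  X $ i $ j is the entry X_{ij}.\<close>
definition Qmap :: "mgraph \<Rightarrow> real^'n^'n \<Rightarrow> real^'n^'n" where
  "Qmap H X = (\<chi> i k. \<Sum>j \<in> {j \<in> {0..<nodes H} \<rightarrow>\<^sub>E (UNIV :: 'n set).
        inj_on j {0..<nodes H} \<and> j (out_a H) = i \<and> j (out_b H) = k}.
      prod_mset (image_mset (\<lambda>(r, s). X $ j r $ j s) (edges H)))"

definition perm_act :: "('n \<Rightarrow> 'n) \<Rightarrow> real^'n^'n \<Rightarrow> real^'n^'n" where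
  "perm_act g X = (\<chi> i j. X $ (inv g i) $ (inv g j))"

definition equivariant :: "(real^'n^'n \<Rightarrow> real^'n^'n) \<Rightarrow> bool" where
  "equivariant P \<longleftrightarrow> (\<forall>g X. g permutes (UNIV :: 'n set) \<longrightarrow> P (perm_act g X) = perm_act g (P X))"

definition monomial :: "('n \<times> 'n) multiset \<Rightarrow> real^'n^'n \<Rightarrow> real" where
  "monomial M X = prod_mset (image_mset (\<lambda>(r, s). X $ r $ s) M)"

definition polymap :: "nat \<Rightarrow> (real^'n^'n \<Rightarrow> real^'n^'n) \<Rightarrow> bool" where
  "polymap d P \<longleftrightarrow> (\<forall>i k. \<exists>c :: ('n \<times> 'n) multiset \<Rightarrow> real.
      \<forall>X. P X $ i $ k = (\<Sum>M \<in> {M. size M \<le> d}. c M * monomial M X))"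

text \<open>M_H(X) = delta^{a,b} prod X_{r,s}, with nodes embedded into 'n via e.\<close>
definition Mmap :: "mgraph \<Rightarrow> (nat \<Rightarrow> 'n) \<Rightarrow> real^'n^'n \<Rightarrow> real^'n^'n" where
  "Mmap H e X = (\<chi> i k. if i = e (out_a H) \<and> k = e (out_b H)
      then prod_mset (image_mset (\<lambda>(r, s). X $ e r $ e s) (edges H)) else 0)"

end

theory Submission
  imports Defs
begin


lemma digits_sum_less:
  fixes a :: "nat \<Rightarrow> nat"
  assumes "\<forall>i<N. a i < B"
  shows "(\<Sum>i<N. a i * B ^ i) < B ^ N"
  using assms
proof (induction N)
  case 0 then show ?case by simp
next
  case (Suc N)
  have h1: "(\<Sum>i<N. a i * B ^ i) < B ^ N" using Suc by auto
  have h2: "a N + 1 \<le> B" using Suc.prems by auto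
  have "(\<Sum>i<Suc N. a i * B ^ i) = (\<Sum>i<N. a i * B ^ i) + a N * B ^ N" by simp
  also have "\<dots> < B ^ N + a N * B ^ N" using h1 by simp
  also have "\<dots> = (a N + 1) * B ^ N" by simp
  also have "\<dots> \<le> B * B ^ N" using h2 by (intro mult_right_mono) auto
  finally show ?case by simp
qed

lemma digits_unique:
  fixes a b :: "nat \<Rightarrow> nat"
  assumes "\<forall>i<N. a i < B" "\<forall>i<N. b i < B"
    and "(\<Sum>i<N. a i * B ^ i) = (\<Sum>i<N. b i * B ^ i)"
  shows "\<forall>i<N. a i = b i"
  using assms
proof (induction N)
  case 0 then show ?case by simp
next
  case (Suc N)
  let ?A = "(\<Sum>i<N. a i * B ^ i)" and ?B = "(\<Sum>i<N. b i * B ^ i)"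
  have la: "?A < B ^ N" using Suc.prems by (intro digits_sum_less) auto
  have lb: "?B < B ^ N" using Suc.prems by (intro digits_sum_less) auto
  have eq: "?A + a N * B ^ N = ?B + b N * B ^ N" using Suc.prems(3) by simp
  have "B > 0" using Suc.prems(1) by auto
  then have pos: "B ^ N > 0" by simp
  have "(?A + a N * B ^ N) div B ^ N = a N"
    using div_mult_self1[of "B ^ N" ?A "a N"] div_less[OF la] pos by simp
  moreover have "(?B + b N * B ^ N) div B ^ N = b N"
    using div_mult_self1[of "B ^ N" ?B "b N"] div_less[OF lb] pos by simp
  ultimately have abN: "a N = b N" using eq by simp
  then have "?A = ?B" using eq by simp
  moreover have "\<forall>i<N. a i < B" "\<forall>i<N. b i < B" using Suc.prems(1,2) by simp_all
  ultimately have IH: "\<forall>i<N. a i = b i" using Suc.IH by blast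
  show ?case
  proof (intro allI impI)
    fix i assume "i < Suc N"
    then show "a i = b i" using IH abN by (cases "i = N") auto
  qed
qed

lemma finite_size_le: "finite {M :: ('a::finite) multiset. size M \<le> d}"
proof -
  have "{M :: 'a multiset. size M \<le> d} = (\<Union>s\<le>d. multisets_of_size UNIV s)"
    by (auto simp: multisets_of_size_def)
  then show ?thesis by auto
qed

lemma prod_mset_pow: "prod_mset (image_mset (\<lambda>p. (t::real) ^ w p) M) = t ^ sum_mset (image_mset w M)"
  by (induction M) (auto simp: power_add)

lemma sum_mset_count: "sum_mset (image_mset (w::'a::finite \<Rightarrow> nat) M) = (\<Sum>p\<in>UNIV. count M p * w p)"
proof (induction M)
  case empty then show ?case by simp
next
  case (add x M)
  have "(\<Sum>p\<in>UNIV. count (add_mset x M) p * w p) = (\<Sum>p\<in>UNIV. count M p * w p + (if p = x then w p else 0))"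
    by (intro sum.cong) auto
  also have "\<dots> = (\<Sum>p\<in>UNIV. count M p * w p) + w x"
    by (simp add: sum.distrib)
  finally show ?case using add by simp
qed

lemma mono_indep:
  fixes a :: "('n::finite \<times> 'n) multiset \<Rightarrow> real"
  assumes h: "\<And>X. (\<Sum>M \<in> {M. size M \<le> d}. a M * monomial M X) = 0"
    and M0: "size M0 \<le> d"
  shows "a M0 = 0"
proof -
  let ?T = "{M :: ('n \<times> 'n) multiset. size M \<le> d}"
  let ?N = "card (UNIV :: ('n \<times> 'n) set)"
  obtain idx where idx: "bij_betw idx (UNIV :: ('n \<times> 'n) set) {..<?N}"
    using ex_bij_betw_finite_nat[of "UNIV :: ('n \<times> 'n) set"] unfolding atLeast0LessThan by auto
  define B where "B = d + 1"
  define w where "w p = B ^ idx p" for p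
  define e where "e M = sum_mset (image_mset w M)" for M :: "('n \<times> 'n) multiset"
  have inv_idx: "bij_betw (inv_into UNIV idx) {..<?N} UNIV"
    using idx bij_betw_inv_into by blast
  have e_alt: "e M = (\<Sum>i<?N. count M (inv_into UNIV idx i) * B ^ i)" for M
  proof -
    have "e M = (\<Sum>p\<in>UNIV. count M p * w p)" unfolding e_def by (rule sum_mset_count)
    also have "\<dots> = (\<Sum>i\<in>{..<?N}. count M (inv_into UNIV idx i) * w (inv_into UNIV idx i))"
      by (rule sum.reindex_bij_betw[symmetric, OF inv_idx])
    also have "\<dots> = (\<Sum>i\<in>{..<?N}. count M (inv_into UNIV idx i) * B ^ i)"
    proof (intro sum.cong refl)
      fix i assume "i \<in> {..<?N}"
      then have "i \<in> idx ` UNIV" using idx by (auto simp: bij_betw_def)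
      then have "idx (inv_into UNIV idx i) = i" by (rule f_inv_into_f)
      then show "count M (inv_into UNIV idx i) * w (inv_into UNIV idx i) = count M (inv_into UNIV idx i) * B ^ i"
        unfolding w_def by simp
    qed
    finally show ?thesis .
  qed
  have e_inj: "inj_on e ?T"
  proof (rule inj_onI)
    fix M1 M2 assume m1: "M1 \<in> ?T" and m2: "M2 \<in> ?T" and eq: "e M1 = e M2"
    have "\<forall>i<?N. count M1 (inv_into UNIV idx i) = count M2 (inv_into UNIV idx i)"
    proof (rule digits_unique[where B=B])
      show "\<forall>i<?N. count M1 (inv_into UNIV idx i) < B"
        proof (intro allI impI)
        fix i have "count M1 (inv_into UNIV idx i) \<le> size M1" by (rule count_le_size)
        then show "count M1 (inv_into UNIV idx i) < B" using m1 unfolding B_def by simp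
      qed
      show "\<forall>i<?N. count M2 (inv_into UNIV idx i) < B"
        proof (intro allI impI)
        fix i have "count M2 (inv_into UNIV idx i) \<le> size M2" by (rule count_le_size)
        then show "count M2 (inv_into UNIV idx i) < B" using m2 unfolding B_def by simp
      qed
      show "(\<Sum>i<?N. count M1 (inv_into UNIV idx i) * B ^ i) = (\<Sum>i<?N. count M2 (inv_into UNIV idx i) * B ^ i)"
        using eq e_alt by simp
    qed
    moreover have "idx p < ?N" "inv_into UNIV idx (idx p) = p" for p
      using idx by (auto simp: bij_betw_def inv_into_f_f)
    ultimately have "count M1 p = count M2 p" for p
    proof -
      assume a1: "\<forall>i<?N. count M1 (inv_into UNIV idx i) = count M2 (inv_into UNIV idx i)"
        and a2: "\<And>p. idx p < ?N" and a3: "\<And>p. inv_into UNIV idx (idx p) = p"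
      have "count M1 (inv_into UNIV idx (idx p)) = count M2 (inv_into UNIV idx (idx p))"
        using a1 a2 by blast
      then show ?thesis using a3 by simp
    qed
    then show "M1 = M2" by (simp add: multiset_eq_iff)
  qed
  define K where "K = Max (e ` ?T)"
  define c' where "c' k = (if k \<in> e ` ?T then a (the_inv_into ?T e k) else 0)" for k
  have finT: "finite ?T" by (rule finite_size_le)
  have "\<forall>t::real. (\<Sum>k\<le>K. c' k * t ^ k) = 0"
  proof
    fix t :: real
    define X :: "real^'n^'n" where "X = (\<chi> r s. t ^ w (r, s))"
    have mono: "monomial M X = t ^ e M" for M
    proof -
      have "monomial M X = prod_mset (image_mset (\<lambda>p. t ^ w p) M)"
        unfolding monomial_def X_def by (auto intro!: arg_cong[where f=prod_mset] image_mset_cong)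
      then show ?thesis unfolding e_def by (simp add: prod_mset_pow)
    qed
    have "(\<Sum>k\<le>K. c' k * t ^ k) = (\<Sum>k\<in>e ` ?T. c' k * t ^ k)"
      using finT unfolding K_def c'_def
      by (intro sum.mono_neutral_right) auto
    also have "\<dots> = (\<Sum>M\<in>?T. c' (e M) * t ^ e M)"
      by (rule sum.reindex[OF e_inj, unfolded o_def])
    also have "\<dots> = (\<Sum>M\<in>?T. a M * monomial M X)"
      unfolding c'_def mono using e_inj by (intro sum.cong) (auto simp: the_inv_into_f_f)
    also have "\<dots> = 0" by (rule h)
    finally show "(\<Sum>k\<le>K. c' k * t ^ k) = 0" .
  qed
  then have "\<forall>k\<le>K. c' k = 0" using Transcendental.polyfun_eq_0[of c' K] by simp
  moreover have "e M0 \<le> K" using finT M0 unfolding K_def by (intro Max_ge) auto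
  ultimately have "c' (e M0) = 0" by blast
  then show ?thesis unfolding c'_def using M0 e_inj by (auto simp: the_inv_into_f_f)
qed



definition Jset :: "mgraph \<Rightarrow> 'n \<Rightarrow> 'n \<Rightarrow> (nat \<Rightarrow> 'n) set" where
  "Jset H i k = {j \<in> {0..<nodes H} \<rightarrow>\<^sub>E UNIV. inj_on j {0..<nodes H} \<and> j (out_a H) = i \<and> j (out_b H) = k}"

definition img :: "(nat \<Rightarrow> 'n) \<Rightarrow> (nat \<times> nat) multiset \<Rightarrow> ('n \<times> 'n) multiset" where
  "img j E = image_mset (map_prod j j) E"

definition Fc :: "mgraph \<Rightarrow> 'n \<Rightarrow> 'n \<Rightarrow> ('n \<times> 'n) multiset \<Rightarrow> nat" where
  "Fc H i k M = card {j \<in> Jset H i k. img j (edges H) = M}"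

lemma finite_Jset: "finite (Jset H i (k::'n::finite))"
proof -
  have "finite ({0..<nodes H} \<rightarrow>\<^sub>E (UNIV::'n set))" by (intro finite_PiE) auto
  moreover have "Jset H i k \<subseteq> {0..<nodes H} \<rightarrow>\<^sub>E (UNIV::'n set)" unfolding Jset_def by blast
  ultimately show ?thesis by (rule finite_subset[rotated])
qed

lemma Qmap_entry: "Qmap H X $ i $ k = (\<Sum>j \<in> Jset H i k. monomial (img j (edges H)) X)"
  unfolding Qmap_def Jset_def monomial_def img_def
  by (simp add: multiset.map_comp o_def case_prod_unfold)

lemma Qmap_poly:
  fixes H :: mgraph and i k :: "'n::finite"
  assumes "size (edges H) \<le> d"
  shows "Qmap H X $ i $ k = (\<Sum>M \<in> {M. size M \<le> d}. real (Fc H i k M) * monomial M X)"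
proof -
  have "Qmap H X $ i $ k = (\<Sum>j \<in> Jset H i k. monomial (img j (edges H)) X)" by (rule Qmap_entry)
  also have "\<dots> = (\<Sum>M \<in> {M. size M \<le> d}. \<Sum>j \<in> {j \<in> Jset H i k. img j (edges H) = M}. monomial (img j (edges H)) X)"
  proof (rule sum.group[symmetric])
    show "finite (Jset H i k)" by (rule finite_Jset)
    show "finite {M :: ('n \<times> 'n) multiset. size M \<le> d}" by (rule finite_size_le)
    show "(\<lambda>j. img j (edges H)) ` Jset H i k \<subseteq> {M. size M \<le> d}"
      using assms by (auto simp: img_def)
  qed
  also have "\<dots> = (\<Sum>M \<in> {M. size M \<le> d}. real (Fc H i k M) * monomial M X)"
  proof (rule sum.cong[OF refl])
    fix M :: "('n \<times> 'n) multiset"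
    have "(\<Sum>j \<in> {j \<in> Jset H i k. img j (edges H) = M}. monomial (img j (edges H)) X)
        = (\<Sum>j \<in> {j \<in> Jset H i k. img j (edges H) = M}. monomial M X)"
      by (rule sum.cong) auto
    then show "(\<Sum>j \<in> {j \<in> Jset H i k. img j (edges H) = M}. monomial (img j (edges H)) X)
        = real (Fc H i k M) * monomial M X" unfolding Fc_def by simp
  qed
  finally show ?thesis .
qed

lemma perm_act_entry: "perm_act g X $ i $ j = X $ inv g i $ inv g j"
  by (simp add: perm_act_def)

lemma mono_perm: "monomial M (perm_act g X) = monomial (image_mset (map_prod (inv g) (inv g)) M) X"
  unfolding monomial_def perm_act_def by (simp add: multiset.map_comp o_def case_prod_unfold)

lemma img_restrict:
  assumes "wf_mgraph H"
  shows "img (restrict (g \<circ> j) {0..<nodes H}) (edges H) = image_mset (map_prod g g) (img j (edges H))"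
  unfolding img_def multiset.map_comp
proof (rule image_mset_cong)
  fix x assume "x \<in># edges H"
  then obtain r s where x: "x = (r, s)" "r < nodes H" "s < nodes H"
    using assms unfolding wf_mgraph_def by (cases x) auto
  then show "map_prod (restrict (g \<circ> j) {0..<nodes H}) (restrict (g \<circ> j) {0..<nodes H}) x
      = (map_prod g g \<circ> map_prod j j) x" by simp
qed

lemma Jset_perm:
  fixes g :: "'n \<Rightarrow> 'n"
  assumes g: "g permutes UNIV" and wf: "wf_mgraph H"
  shows "bij_betw (\<lambda>j. restrict (g \<circ> j) {0..<nodes H}) (Jset H i k) (Jset H (g i) (g k))"
proof (rule bij_betw_byWitness[where f' = "\<lambda>j. restrict (inv g \<circ> j) {0..<nodes H}"])
  have ig1: "inv g (g x) = x" for x using permutes_inverses(2)[OF g] .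
  have ig2: "g (inv g x) = x" for x using permutes_inverses(1)[OF g] .
  have ab: "out_a H \<in> {0..<nodes H}" "out_b H \<in> {0..<nodes H}" using wf unfolding wf_mgraph_def by auto
  show "\<forall>j\<in>Jset H i k. restrict (inv g \<circ> restrict (g \<circ> j) {0..<nodes H}) {0..<nodes H} = j"
  proof
    fix j assume "j \<in> Jset H i k"
    then have "j \<in> extensional {0..<nodes H}" unfolding Jset_def by (auto simp: PiE_def)
    then show "restrict (inv g \<circ> restrict (g \<circ> j) {0..<nodes H}) {0..<nodes H} = j"
      by (auto simp: fun_eq_iff ig1 extensional_def)
  qed
  show "\<forall>j\<in>Jset H (g i) (g k). restrict (g \<circ> restrict (inv g \<circ> j) {0..<nodes H}) {0..<nodes H} = j"
  proof
    fix j assume "j \<in> Jset H (g i) (g k)"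
    then have "j \<in> extensional {0..<nodes H}" unfolding Jset_def by (auto simp: PiE_def)
    then show "restrict (g \<circ> restrict (inv g \<circ> j) {0..<nodes H}) {0..<nodes H} = j"
      by (auto simp: fun_eq_iff ig2 extensional_def)
  qed
  show "(\<lambda>j. restrict (g \<circ> j) {0..<nodes H}) ` Jset H i k \<subseteq> Jset H (g i) (g k)"
  proof
    fix j' assume "j' \<in> (\<lambda>j. restrict (g \<circ> j) {0..<nodes H}) ` Jset H i k"
    then obtain j where j: "j \<in> Jset H i k" and j': "j' = restrict (g \<circ> j) {0..<nodes H}" by blast
    have inj: "inj_on j {0..<nodes H}" and ja: "j (out_a H) = i" and jb: "j (out_b H) = k"
      using j unfolding Jset_def by auto
    have "inj_on j' {0..<nodes H}"
    proof (rule inj_onI)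
      fix x y assume "x \<in> {0..<nodes H}" "y \<in> {0..<nodes H}" "j' x = j' y"
      then have "g (j x) = g (j y)" "x \<in> {0..<nodes H}" "y \<in> {0..<nodes H}" unfolding j' by auto
      then have "j x = j y" "x \<in> {0..<nodes H}" "y \<in> {0..<nodes H}" using ig1 by metis+
      then show "x = y" using inj by (auto dest: inj_onD)
    qed
    moreover have "j' \<in> {0..<nodes H} \<rightarrow>\<^sub>E UNIV" unfolding j' by simp
    moreover have "j' (out_a H) = g i" "j' (out_b H) = g k" unfolding j' using ab ja jb by auto
    ultimately show "j' \<in> Jset H (g i) (g k)" unfolding Jset_def by blast
  qed
  show "(\<lambda>j. restrict (inv g \<circ> j) {0..<nodes H}) ` Jset H (g i) (g k) \<subseteq> Jset H i k"
  proof
    fix j' assume "j' \<in> (\<lambda>j. restrict (inv g \<circ> j) {0..<nodes H}) ` Jset H (g i) (g k)"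
    then obtain j where j: "j \<in> Jset H (g i) (g k)" and j': "j' = restrict (inv g \<circ> j) {0..<nodes H}" by blast
    have inj: "inj_on j {0..<nodes H}" and ja: "j (out_a H) = g i" and jb: "j (out_b H) = g k"
      using j unfolding Jset_def by auto
    have "inj_on j' {0..<nodes H}"
    proof (rule inj_onI)
      fix x y assume "x \<in> {0..<nodes H}" "y \<in> {0..<nodes H}" "j' x = j' y"
      then have "inv g (j x) = inv g (j y)" "x \<in> {0..<nodes H}" "y \<in> {0..<nodes H}" unfolding j' by auto
      then have "j x = j y" "x \<in> {0..<nodes H}" "y \<in> {0..<nodes H}" using ig2 by metis+
      then show "x = y" using inj by (auto dest: inj_onD)
    qed
    moreover have "j' \<in> {0..<nodes H} \<rightarrow>\<^sub>E UNIV" unfolding j' by simp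
    moreover have "j' (out_a H) = i" "j' (out_b H) = k" unfolding j' using ab ja jb ig1 by auto
    ultimately show "j' \<in> Jset H i k" unfolding Jset_def by blast
  qed
qed

lemma Qmap_equiv:
  assumes wf: "wf_mgraph H"
  shows "equivariant (Qmap H :: real^'n::finite^'n \<Rightarrow> real^'n^'n)"
  unfolding equivariant_def
proof (intro allI impI)
  fix g :: "'n \<Rightarrow> 'n" and X :: "real^'n^'n" assume g: "g permutes UNIV"
  have ig: "inv g permutes UNIV" using permutes_inv[OF g] .
  have "Qmap H (perm_act g X) $ i $ k = perm_act g (Qmap H X) $ i $ k" for i k
  proof -
    have "Qmap H (perm_act g X) $ i $ k
        = (\<Sum>j\<in>Jset H i k. monomial (img (restrict (inv g \<circ> j) {0..<nodes H}) (edges H)) X)"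
      unfolding Qmap_entry mono_perm img_restrict[OF wf] ..
    also have "\<dots> = (\<Sum>j\<in>Jset H (inv g i) (inv g k). monomial (img j (edges H)) X)"
      by (rule sum.reindex_bij_betw[OF Jset_perm[OF ig wf]])
    also have "\<dots> = perm_act g (Qmap H X) $ i $ k" unfolding perm_act_entry Qmap_entry ..
    finally show ?thesis .
  qed
  then show "Qmap H (perm_act g X) = perm_act g (Qmap H X)" by (simp add: vec_eq_iff)
qed



lemma iso_refl: "mgraph_iso H H"
  unfolding mgraph_iso_def by (rule exI[of _ id]) (simp add: prod.map_id0)

lemma wf_in: assumes "wf_mgraph H" "x \<in># edges H"
  shows "fst x < nodes H" "snd x < nodes H"
  using assms unfolding wf_mgraph_def by auto

lemma iso_sym:
  assumes wf: "wf_mgraph H" and iso: "mgraph_iso H H'"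
  shows "mgraph_iso H' H"
proof -
  obtain f where f: "bij_betw f {0..<nodes H} {0..<nodes H'}"
    and E: "image_mset (map_prod f f) (edges H) = edges H'"
    and a: "f (out_a H) = out_a H'" and b: "f (out_b H) = out_b H'"
    using iso unfolding mgraph_iso_def by blast
  let ?g = "inv_into {0..<nodes H} f"
  have g: "bij_betw ?g {0..<nodes H'} {0..<nodes H}" by (rule bij_betw_inv_into[OF f])
  have gf: "?g (f x) = x" if "x \<in> {0..<nodes H}" for x
    using f that bij_betw_inv_into_left by fastforce
  have "image_mset (map_prod ?g ?g) (edges H') = image_mset (map_prod ?g ?g \<circ> map_prod f f) (edges H)"
    unfolding E[symmetric] multiset.map_comp ..
  also have "\<dots> = image_mset id (edges H)"
  proof (rule image_mset_cong)
    fix x assume "x \<in># edges H"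
    then have "fst x \<in> {0..<nodes H}" "snd x \<in> {0..<nodes H}" using wf_in[OF wf] by auto
    then show "(map_prod ?g ?g \<circ> map_prod f f) x = id x" using gf by (cases x) auto
  qed
  finally have E': "image_mset (map_prod ?g ?g) (edges H') = edges H" by simp
  have ab: "out_a H \<in> {0..<nodes H}" "out_b H \<in> {0..<nodes H}" using wf unfolding wf_mgraph_def by auto
  have "?g (out_a H') = out_a H" "?g (out_b H') = out_b H" unfolding a[symmetric] b[symmetric] using gf ab by auto
  then show ?thesis unfolding mgraph_iso_def using g E' by blast
qed

lemma Jset_iso:
  fixes i k :: 'n
  assumes wf: "wf_mgraph H" and f: "bij_betw f {0..<nodes H} {0..<nodes H'}"
    and E: "image_mset (map_prod f f) (edges H) = edges H'"
    and a: "f (out_a H) = out_a H'" and b: "f (out_b H) = out_b H'"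
  shows "bij_betw (\<lambda>j. restrict (j \<circ> f) {0..<nodes H}) (Jset H' i k) (Jset H i k)"
    and "\<And>j. img (restrict (j \<circ> f) {0..<nodes H}) (edges H) = img j (edges H')"
proof -
  let ?V = "{0..<nodes H}" and ?V' = "{0..<nodes H'}"
  let ?g = "inv_into ?V f"
  have g: "bij_betw ?g ?V' ?V" by (rule bij_betw_inv_into[OF f])
  have gf: "?g (f x) = x" if "x \<in> ?V" for x
    using f that bij_betw_inv_into_left by fastforce
  have fg: "f (?g y) = y" if "y \<in> ?V'" for y
    using f that bij_betw_inv_into_right by fastforce
  have fV: "f x \<in> ?V'" if "x \<in> ?V" for x using f that bij_betwE by blast
  have gV: "?g y \<in> ?V" if "y \<in> ?V'" for y using g that bij_betwE by blast
  have ab: "out_a H \<in> ?V" "out_b H \<in> ?V" using wf unfolding wf_mgraph_def by auto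
  have injf: "inj_on f ?V" using f bij_betw_def by blast
  have injg: "inj_on ?g ?V'" using g bij_betw_def by blast
  show "bij_betw (\<lambda>j. restrict (j \<circ> f) ?V) (Jset H' i k) (Jset H i k)"
  proof (rule bij_betw_byWitness[where f' = "\<lambda>j. restrict (j \<circ> ?g) ?V'"])
    show "\<forall>j\<in>Jset H' i k. restrict (restrict (j \<circ> f) ?V \<circ> ?g) ?V' = j"
    proof
      fix j assume "j \<in> Jset H' i k"
      then have "j \<in> extensional ?V'" unfolding Jset_def by (auto simp: PiE_def)
      then show "restrict (restrict (j \<circ> f) ?V \<circ> ?g) ?V' = j"
        using fg gV by (auto simp: fun_eq_iff extensional_def)
    qed
    show "\<forall>j\<in>Jset H i k. restrict (restrict (j \<circ> ?g) ?V' \<circ> f) ?V = j"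
    proof
      fix j assume "j \<in> Jset H i k"
      then have "j \<in> extensional ?V" unfolding Jset_def by (auto simp: PiE_def)
      then show "restrict (restrict (j \<circ> ?g) ?V' \<circ> f) ?V = j"
        using gf fV by (auto simp: fun_eq_iff extensional_def)
    qed
    show "(\<lambda>j. restrict (j \<circ> f) ?V) ` Jset H' i k \<subseteq> Jset H i k"
    proof
      fix j' assume "j' \<in> (\<lambda>j. restrict (j \<circ> f) ?V) ` Jset H' i k"
      then obtain j where j: "j \<in> Jset H' i k" and j': "j' = restrict (j \<circ> f) ?V" by blast
      have inj: "inj_on j ?V'" and ja: "j (out_a H') = i" and jb: "j (out_b H') = k"
        using j unfolding Jset_def by auto
      have "inj_on j' ?V"
      proof (rule inj_onI)
        fix x y assume xy: "x \<in> ?V" "y \<in> ?V" "j' x = j' y"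
        then have "j (f x) = j (f y)" unfolding j' by auto
        then have "f x = f y" using inj fV xy(1,2) by (auto dest: inj_onD)
        then show "x = y" using injf xy(1,2) by (auto dest: inj_onD)
      qed
      moreover have "j' \<in> ?V \<rightarrow>\<^sub>E UNIV" unfolding j' by simp
      moreover have "j' (out_a H) = i" "j' (out_b H) = k" unfolding j' using ab ja jb a b by auto
      ultimately show "j' \<in> Jset H i k" unfolding Jset_def by blast
    qed
    show "(\<lambda>j. restrict (j \<circ> ?g) ?V') ` Jset H i k \<subseteq> Jset H' i k"
    proof
      fix j' assume "j' \<in> (\<lambda>j. restrict (j \<circ> ?g) ?V') ` Jset H i k"
      then obtain j where j: "j \<in> Jset H i k" and j': "j' = restrict (j \<circ> ?g) ?V'" by blast
      have inj: "inj_on j ?V" and ja: "j (out_a H) = i" and jb: "j (out_b H) = k"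
        using j unfolding Jset_def by auto
      have "inj_on j' ?V'"
      proof (rule inj_onI)
        fix x y assume xy: "x \<in> ?V'" "y \<in> ?V'" "j' x = j' y"
        then have "j (?g x) = j (?g y)" unfolding j' by auto
        then have "?g x = ?g y" using inj gV xy(1,2) by (auto dest: inj_onD)
        then show "x = y" using injg xy(1,2) by (auto dest: inj_onD)
      qed
      moreover have "j' \<in> ?V' \<rightarrow>\<^sub>E UNIV" unfolding j' by simp
      moreover have "j' (out_a H') = i" "j' (out_b H') = k"
        unfolding j' using ab ja jb a[symmetric] b[symmetric] gf fV by auto
      ultimately show "j' \<in> Jset H' i k" unfolding Jset_def by blast
    qed
  qed
  fix j
  have "img (restrict (j \<circ> f) ?V) (edges H) = image_mset (map_prod j j \<circ> map_prod f f) (edges H)"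
    unfolding img_def
  proof (rule image_mset_cong)
    fix x assume "x \<in># edges H"
    then have "fst x \<in> ?V" "snd x \<in> ?V" using wf_in[OF wf] by auto
    then show "map_prod (restrict (j \<circ> f) ?V) (restrict (j \<circ> f) ?V) x = (map_prod j j \<circ> map_prod f f) x"
      by (cases x) auto
  qed
  also have "\<dots> = img j (edges H')" unfolding img_def E[symmetric] multiset.map_comp ..
  finally show "img (restrict (j \<circ> f) ?V) (edges H) = img j (edges H')" .
qed

lemma Qmap_iso:
  assumes wf: "wf_mgraph H" and iso: "mgraph_iso H H'"
  shows "(Qmap H :: real^'n^'n \<Rightarrow> real^'n^'n) = Qmap H'"
proof -
  obtain f where f: "bij_betw f {0..<nodes H} {0..<nodes H'}"
    and E: "image_mset (map_prod f f) (edges H) = edges H'"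
    and a: "f (out_a H) = out_a H'" and b: "f (out_b H) = out_b H'"
    using iso unfolding mgraph_iso_def by blast
  have "Qmap H X $ i $ k = Qmap H' X $ i $ k" for X :: "real^'n^'n" and i k
  proof -
    have "Qmap H' X $ i $ k = (\<Sum>j\<in>Jset H' i k. monomial (img (restrict (j \<circ> f) {0..<nodes H}) (edges H)) X)"
      unfolding Qmap_entry Jset_iso(2)[OF wf f E a b] ..
    also have "\<dots> = Qmap H X $ i $ k"
      unfolding Qmap_entry by (rule sum.reindex_bij_betw[OF Jset_iso(1)[OF wf f E a b]])
    finally show ?thesis by simp
  qed
  then show ?thesis by (intro ext) (simp add: vec_eq_iff)
qed

lemma ends_img:
  assumes H: "H \<in> Bset n d" and j: "j \<in> Jset H i k"
  shows "j ` {0..<nodes H} = {i, k} \<union> fst ` set_mset (img j (edges H)) \<union> snd ` set_mset (img j (edges H))"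
proof -
  have wf: "wf_mgraph H" and noiso: "\<And>v. v < nodes H \<Longrightarrow> v \<noteq> out_a H \<Longrightarrow> v \<noteq> out_b H \<Longrightarrow> \<not> isolated H v"
    using H unfolding Bset_def by auto
  have ja: "j (out_a H) = i" and jb: "j (out_b H) = k" using j unfolding Jset_def by auto
  have ab: "out_a H < nodes H" "out_b H < nodes H" using wf unfolding wf_mgraph_def by auto
  show ?thesis
  proof
    show "j ` {0..<nodes H} \<subseteq> {i, k} \<union> fst ` set_mset (img j (edges H)) \<union> snd ` set_mset (img j (edges H))"
    proof
      fix y assume "y \<in> j ` {0..<nodes H}"
      then obtain v where v: "v < nodes H" "y = j v" by auto
      show "y \<in> {i, k} \<union> fst ` set_mset (img j (edges H)) \<union> snd ` set_mset (img j (edges H))"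
      proof (cases "v = out_a H \<or> v = out_b H")
        case True then show ?thesis using v ja jb by auto
      next
        case False
        then have "\<not> isolated H v" using noiso v by auto
        then obtain r s where rs: "(r, s) \<in># edges H" "r = v \<or> s = v" unfolding isolated_def by auto
        then have "(j r, j s) \<in># img j (edges H)" unfolding img_def by (metis image_eqI map_prod_simp set_image_mset)
        then show ?thesis using rs(2) v(2) by (metis UnI2 fst_conv snd_conv Un_iff image_eqI)
      qed
    qed
    show "{i, k} \<union> fst ` set_mset (img j (edges H)) \<union> snd ` set_mset (img j (edges H)) \<subseteq> j ` {0..<nodes H}"
    proof
      fix y assume y: "y \<in> {i, k} \<union> fst ` set_mset (img j (edges H)) \<union> snd ` set_mset (img j (edges H))"
      show "y \<in> j ` {0..<nodes H}"
      proof (cases "y \<in> {i, k}")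
        case True then show ?thesis using ja jb ab by auto
      next
        case False
        then obtain x where x: "x \<in># edges H" "y = j (fst x) \<or> y = j (snd x)"
          using y unfolding img_def by (auto simp: map_prod_def split: prod.splits)
        then show ?thesis using wf_in[OF wf x(1)] by auto
      qed
    qed
  qed
qed

lemma img_iso:
  assumes H: "H \<in> Bset n d" and H': "H' \<in> Bset n d" and j: "j \<in> Jset H i k" and j': "j' \<in> Jset H' i k"
    and eq: "img j (edges H) = img j' (edges H')"
  shows "mgraph_iso H H'"
proof -
  let ?V = "{0..<nodes H}" and ?V' = "{0..<nodes H'}"
  have wf: "wf_mgraph H" and wf': "wf_mgraph H'" using H H' unfolding Bset_def by auto
  have rng: "j ` ?V = j' ` ?V'" using ends_img[OF H j] ends_img[OF H' j'] eq by simp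
  have inj: "inj_on j ?V" and inj': "inj_on j' ?V'" using j j' unfolding Jset_def by auto
  let ?g = "inv_into ?V' j'"
  let ?f = "?g \<circ> j"
  have b1: "bij_betw j ?V (j' ` ?V')" using inj rng by (simp add: bij_betw_def)
  have b2: "bij_betw ?g (j' ` ?V') ?V'" using inj' by (simp add: bij_betw_inv_into inj_on_imp_bij_betw)
  have f: "bij_betw ?f ?V ?V'" by (rule bij_betw_trans[OF b1 b2])
  have gj: "?g (j' x) = x" if "x \<in> ?V'" for x using inj' that by (simp add: inv_into_f_f)
  have "image_mset (map_prod ?f ?f) (edges H) = image_mset (map_prod ?g ?g) (img j (edges H))"
    unfolding img_def multiset.map_comp by (simp add: map_prod.comp)
  also have "\<dots> = image_mset (map_prod ?g ?g) (img j' (edges H'))" by (simp only: eq)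
  also have "\<dots> = image_mset (map_prod ?g ?g \<circ> map_prod j' j') (edges H')" unfolding img_def multiset.map_comp ..
  also have "\<dots> = image_mset id (edges H')"
  proof (rule image_mset_cong)
    fix x assume "x \<in># edges H'"
    then have "fst x \<in> ?V'" "snd x \<in> ?V'" using wf_in[OF wf'] by auto
    then show "(map_prod ?g ?g \<circ> map_prod j' j') x = id x" using gj by (cases x) auto
  qed
  finally have E: "image_mset (map_prod ?f ?f) (edges H) = edges H'" by simp
  have ja: "j (out_a H) = i" "j (out_b H) = k" "j' (out_a H') = i" "j' (out_b H') = k"
    using j j' unfolding Jset_def by auto
  have ab': "out_a H' \<in> ?V'" "out_b H' \<in> ?V'" using wf' unfolding wf_mgraph_def by auto
  have "?f (out_a H) = out_a H'" using gj[of "out_a H'"] ab' ja by simp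
  moreover have "?f (out_b H) = out_b H'" using gj[of "out_b H'"] ab' ja by simp
  ultimately have "?f (out_a H) = out_a H'" "?f (out_b H) = out_b H'" by blast+
  then show ?thesis unfolding mgraph_iso_def using f E by blast
qed

lemma R_uniq:
  assumes "\<forall>H\<in>Bset n d. \<exists>!H'\<in>R. mgraph_iso H H'" "H0 \<in> R" "R \<subseteq> Bset n d" "H \<in> R" "mgraph_iso H0 H"
  shows "H = H0"
proof -
  have "H0 \<in> Bset n d" using assms by auto
  then have "\<exists>!H'\<in>R. mgraph_iso H0 H'" using assms(1) by blast
  then show ?thesis using assms(2,4,5) iso_refl by blast
qed

lemma Fc_pos:
  "Fc H i (k::'n::finite) M > 0 \<longleftrightarrow> (\<exists>j \<in> Jset H i k. img j (edges H) = M)"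
  unfolding Fc_def using finite_Jset[of H i k] by (auto simp: card_gt_0_iff)



lemma perm_extend:
  fixes e j :: "nat \<Rightarrow> 'n::finite"
  assumes fin: "finite V" and ie: "inj_on e V" and ij: "inj_on j V"
  shows "\<exists>g. g permutes UNIV \<and> (\<forall>v\<in>V. g (e v) = j v)"
proof -
  let ?A = "e ` V" and ?B = "j ` V"
  have cA: "card ?A = card V" using ie by (rule card_image)
  have cB: "card ?B = card V" using ij by (rule card_image)
  have "card (UNIV - ?A) = card (UNIV - ?B)"
    using cA cB fin by (simp add: card_Diff_subset)
  then obtain h where h: "bij_betw h (UNIV - ?A) (UNIV - ?B)"
    using finite_same_card_bij[of "UNIV - ?A" "UNIV - ?B"] by auto
  define g where "g x = (if x \<in> ?A then j (inv_into V e x) else h x)" for x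
  have b1: "bij_betw (inv_into V e) ?A V" using ie by (simp add: bij_betw_inv_into inj_on_imp_bij_betw)
  have b2: "bij_betw j V ?B" using ij by (simp add: inj_on_imp_bij_betw)
  have b3: "bij_betw (j \<circ> inv_into V e) ?A ?B" by (rule bij_betw_trans[OF b1 b2])
  have g1: "bij_betw g ?A ?B" using b3 by (rule bij_betw_cong[THEN iffD1, rotated]) (simp add: g_def)
  have g2: "bij_betw g (UNIV - ?A) (UNIV - ?B)" using h by (rule bij_betw_cong[THEN iffD1, rotated]) (simp add: g_def)
  have "bij_betw g (?A \<union> (UNIV - ?A)) (?B \<union> (UNIV - ?B))"
    by (rule bij_betw_combine[OF g1 g2]) auto
  then have "bij_betw g UNIV UNIV" by simp
  then have "g permutes UNIV" by (rule bij_imp_permutes) auto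
  moreover have "\<forall>v\<in>V. g (e v) = j v" using ie by (auto simp: g_def inv_into_f_f)
  ultimately show ?thesis by blast
qed

lemma perm_extend_card:
  fixes e j :: "nat \<Rightarrow> 'n::finite"
  assumes fin: "finite V" and ie: "inj_on e V" and ij: "inj_on j V"
  shows "card {g. g permutes (UNIV::'n set) \<and> (\<forall>v\<in>V. g (e v) = j v)} = fact (CARD('n) - card V)"
proof -
  obtain g0 where g0: "g0 permutes UNIV" "\<forall>v\<in>V. g0 (e v) = j v"
    using perm_extend[OF fin ie ij] by blast
  let ?S = "{g. g permutes (UNIV::'n set) \<and> (\<forall>v\<in>V. g (e v) = j v)}"
  let ?C = "UNIV - e ` V"
  have inv1: "inv g0 (g0 x) = x" for x using permutes_inverses(2)[OF g0(1)] .
  have inv2: "g0 (inv g0 x) = x" for x using permutes_inverses(1)[OF g0(1)] .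
  have "?S = (\<lambda>p. g0 \<circ> p) ` {p. p permutes ?C}"
  proof
    show "(\<lambda>p. g0 \<circ> p) ` {p. p permutes ?C} \<subseteq> ?S"
    proof
      fix g assume "g \<in> (\<lambda>p. g0 \<circ> p) ` {p. p permutes ?C}"
      then obtain p where p: "p permutes ?C" and g: "g = g0 \<circ> p" by blast
      have pU: "p permutes UNIV" using permutes_subset[OF p] by blast
      have "g permutes UNIV" unfolding g by (rule permutes_compose[OF pU g0(1)])
      moreover have "p (e v) = e v" if "v \<in> V" for v using permutes_not_in[OF p] that by blast
      ultimately show "g \<in> ?S" using g0(2) g by auto
    qed
    show "?S \<subseteq> (\<lambda>p. g0 \<circ> p) ` {p. p permutes ?C}"
    proof
      fix g assume g: "g \<in> ?S"
      define p where "p = inv g0 \<circ> g"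
      have gU: "g permutes UNIV" using g by blast
      have pU: "p permutes UNIV" unfolding p_def by (rule permutes_compose[OF gU permutes_inv[OF g0(1)]])
      have pfix: "p x = x" if "x \<notin> ?C" for x
      proof -
        obtain v where v: "v \<in> V" "x = e v" using \<open>x \<notin> ?C\<close> by blast
        have "p x = inv g0 (j v)" unfolding p_def using g v by auto
        also have "\<dots> = inv g0 (g0 (e v))" using g0(2) v by simp
        finally show ?thesis using inv1 v by simp
      qed
      have "p permutes ?C" using pU pfix unfolding permutes_def by blast
      moreover have "g = g0 \<circ> p" unfolding p_def by (simp add: fun_eq_iff inv2)
      ultimately show "g \<in> (\<lambda>p. g0 \<circ> p) ` {p. p permutes ?C}" by blast
    qed
  qed
  moreover have "inj_on (\<lambda>p. g0 \<circ> p) {p. p permutes ?C}"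
  proof (rule inj_onI)
    fix p q assume "g0 \<circ> p = g0 \<circ> q"
    then have "\<And>x. g0 (p x) = g0 (q x)" by (metis comp_apply)
    then show "p = q" using inv1 by (metis ext)
  qed
  ultimately have "card ?S = card {p. p permutes ?C}" by (simp add: card_image)
  also have "\<dots> = fact (card ?C)" by (rule card_permutations) auto
  also have "card ?C = CARD('n) - card V" using fin ie by (simp add: card_Diff_subset card_image)
  finally show ?thesis .
qed

lemma inj_exists:
  assumes "m \<le> CARD('n::finite)"
  shows "\<exists>j :: nat \<Rightarrow> 'n. j \<in> {0..<m} \<rightarrow>\<^sub>E UNIV \<and> inj_on j {0..<m}"
proof -
  obtain f :: "nat \<Rightarrow> 'n" where f: "inj_on f {0..<m}"
    using card_le_inj[of "{0..<m}" "UNIV :: 'n set"] assms by auto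
  have "restrict f {0..<m} \<in> {0..<m} \<rightarrow>\<^sub>E UNIV" by simp
  moreover have "inj_on (restrict f {0..<m}) {0..<m}" using f by (simp add: inj_on_def)
  ultimately show ?thesis by blast
qed

lemma finite_Bset: "finite (Bset n d)"
proof -
  let ?P = "{..<n} \<times> {..<n}"
  let ?E = "{E :: (nat \<times> nat) multiset. set_mset E \<subseteq> ?P \<and> size E \<le> d}"
  have "?E = (\<Union>s\<le>d. multisets_of_size ?P s)" by (auto simp: multisets_of_size_def)
  then have fE: "finite ?E" by auto
  let ?S = "{..n} \<times> ?E \<times> {..<n} \<times> {..<n}"
  have "Bset n d \<subseteq> (\<lambda>(m, E, a, b). MG m E a b) ` ?S"
  proof
    fix H assume H: "H \<in> Bset n d"
    then have wf: "wf_mgraph H" and nn: "nodes H \<le> n" and sz: "size (edges H) \<le> d"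
      unfolding Bset_def by auto
    have "set_mset (edges H) \<subseteq> ?P"
    proof
      fix x assume "x \<in># edges H"
      then show "x \<in> ?P" using wf_in[OF wf, of x] nn by (cases x) auto
    qed
    moreover have "out_a H < n" "out_b H < n" using wf nn unfolding wf_mgraph_def by auto
    ultimately have "(nodes H, edges H, out_a H, out_b H) \<in> ?S" using nn sz by auto
    moreover have "H = (\<lambda>(m, E, a, b). MG m E a b) (nodes H, edges H, out_a H, out_b H)" by simp
    ultimately show "H \<in> (\<lambda>(m, E, a, b). MG m E a b) ` ?S" by blast
  qed
  moreover have "finite ?S" using fE by auto
  then have "finite ((\<lambda>(m, E, a, b). MG m E a b) ` ?S)" by (rule finite_imageI)
  ultimately show ?thesis by (rule finite_subset)
qed



lemma Mmap_entry: "Mmap H e X $ p $ q = (if p = e (out_a H) \<and> q = e (out_b H)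
      then prod_mset (image_mset (\<lambda>(r, s). X $ e r $ e s) (edges H)) else 0)"
  by (simp add: Mmap_def)

lemma Mmap_formula:
  fixes X :: "real^'n::finite^'n" and e :: "nat \<Rightarrow> 'n"
  assumes wf: "wf_mgraph H" and ie: "inj_on e {0..<nodes H}"
  shows "real (fact (CARD('n) - nodes H)) *\<^sub>R Qmap H X
    = (\<Sum>g\<in>{g. g permutes (UNIV::'n set)}. perm_act g (Mmap H e (perm_act (inv g) X)))"
proof -
  let ?V = "{0..<nodes H}"
  let ?P = "{g. g permutes (UNIV::'n set)}"
  let ?I = "{j \<in> ?V \<rightarrow>\<^sub>E (UNIV::'n set). inj_on j ?V}"
  let ?phi = "\<lambda>g. restrict (g \<circ> e) ?V"
  let ?F = "real (fact (CARD('n) - nodes H))"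
  have ab: "out_a H \<in> ?V" "out_b H \<in> ?V" using wf unfolding wf_mgraph_def by auto
  have finP: "finite ?P" by (rule finite_permutations) simp
  have finI: "finite ?I"
  proof -
    have "finite (?V \<rightarrow>\<^sub>E (UNIV::'n set))" by (intro finite_PiE) auto
    then show ?thesis by (rule finite_subset[rotated]) blast
  qed
  have entry: "(\<Sum>g\<in>?P. perm_act g (Mmap H e (perm_act (inv g) X))) $ i $ k = ?F * Qmap H X $ i $ k" for i k
  proof -
    define h where "h j = (if j (out_a H) = i \<and> j (out_b H) = k then monomial (img j (edges H)) X else 0)" for j
    have hterm: "perm_act g (Mmap H e (perm_act (inv g) X)) $ i $ k = h (?phi g)" if g: "g permutes UNIV" for g
    proof -
      have c1: "(inv g i = e (out_a H)) \<longleftrightarrow> (g (e (out_a H)) = i)" using permutes_inverses[OF g] by metis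
      have c2: "(inv g k = e (out_b H)) \<longleftrightarrow> (g (e (out_b H)) = k)" using permutes_inverses[OF g] by metis
      have mono: "monomial (img (?phi g) (edges H)) X
          = prod_mset (image_mset (\<lambda>(r, s). perm_act (inv g) X $ e r $ e s) (edges H))"
        unfolding monomial_def img_def multiset.map_comp perm_act_entry permutes_inv_inv[OF g]
      proof (intro arg_cong[where f=prod_mset] image_mset_cong)
        fix x assume "x \<in># edges H"
        then have "fst x \<in> ?V" "snd x \<in> ?V" using wf_in[OF wf] by auto
        then show "((\<lambda>(r, s). X $ r $ s) \<circ> map_prod (?phi g) (?phi g)) x = (\<lambda>(r, s). X $ g (e r) $ g (e s)) x"
          by (cases x) auto
      qed
      show ?thesis unfolding h_def perm_act_entry[of g] Mmap_entry c1 c2 mono using ab by simp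
    qed
    have "(\<Sum>g\<in>?P. perm_act g (Mmap H e (perm_act (inv g) X))) $ i $ k
        = (\<Sum>g\<in>?P. perm_act g (Mmap H e (perm_act (inv g) X)) $ i $ k)" by simp
    also have "\<dots> = (\<Sum>g\<in>?P. h (?phi g))" using hterm by (intro sum.cong) auto
    also have "\<dots> = (\<Sum>j\<in>?I. \<Sum>g\<in>{g\<in>?P. ?phi g = j}. h (?phi g))"
    proof (rule sum.group[symmetric, OF finP finI])
      show "?phi ` ?P \<subseteq> ?I"
      proof
        fix j assume "j \<in> ?phi ` ?P"
        then obtain g where g: "g permutes UNIV" and j: "j = ?phi g" by blast
        have "inj g" using g by (rule permutes_inj)
        then have "inj_on (g \<circ> e) ?V" using ie by (simp add: comp_inj_on inj_on_subset)
        then have "inj_on j ?V" unfolding j by (simp add: inj_on_def)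
        then show "j \<in> ?I" unfolding j by simp
      qed
    qed
    also have "\<dots> = (\<Sum>j\<in>?I. ?F * h j)"
    proof (rule sum.cong[OF refl])
      fix j assume j: "j \<in> ?I"
      have "{g\<in>?P. ?phi g = j} = {g. g permutes (UNIV::'n set) \<and> (\<forall>v\<in>?V. g (e v) = j v)}"
      proof -
        have ext: "j v = undefined" if "v \<notin> ?V" for v using j that by (auto simp: PiE_def extensional_def)
        have "?phi g = j \<longleftrightarrow> (\<forall>v\<in>?V. g (e v) = j v)" for g
        proof
          assume "?phi g = j" then show "\<forall>v\<in>?V. g (e v) = j v" by (metis comp_apply restrict_apply')
        next
          assume "\<forall>v\<in>?V. g (e v) = j v" then show "?phi g = j" using ext by (auto simp: fun_eq_iff)
        qed
        then show ?thesis by blast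
      qed
      moreover have "card {g. g permutes (UNIV::'n set) \<and> (\<forall>v\<in>?V. g (e v) = j v)} = fact (CARD('n) - nodes H)"
        using perm_extend_card[of ?V e j] ie j by simp
      ultimately have cd: "card {g\<in>?P. ?phi g = j} = fact (CARD('n) - nodes H)" by simp
      have "(\<Sum>g\<in>{g\<in>?P. ?phi g = j}. h (?phi g)) = (\<Sum>g\<in>{g\<in>?P. ?phi g = j}. h j)"
        by (rule sum.cong) auto
      also have "\<dots> = ?F * h j" using cd by simp
      finally show "(\<Sum>g\<in>{g\<in>?P. ?phi g = j}. h (?phi g)) = ?F * h j" .
    qed
    also have "\<dots> = ?F * (\<Sum>j\<in>?I. h j)" by (simp add: sum_distrib_left)
    also have "(\<Sum>j\<in>?I. h j) = (\<Sum>j\<in>{j\<in>?I. j (out_a H) = i \<and> j (out_b H) = k}. monomial (img j (edges H)) X)"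
      unfolding h_def by (rule sum.inter_filter[OF finI, symmetric])
    also have "{j\<in>?I. j (out_a H) = i \<and> j (out_b H) = k} = Jset H i k" unfolding Jset_def by blast
    also have "(\<Sum>j\<in>Jset H i k. monomial (img j (edges H)) X) = Qmap H X $ i $ k" by (rule Qmap_entry[symmetric])
    finally show ?thesis .
  qed
  have e2: "(?F *\<^sub>R Qmap H X) $ i $ k = (\<Sum>g\<in>?P. perm_act g (Mmap H e (perm_act (inv g) X))) $ i $ k" for i k
    unfolding entry by simp
  show ?thesis
  proof (rule iffD2[OF vec_eq_iff], rule allI, rule iffD2[OF vec_eq_iff], rule allI)
    fix i k show "(?F *\<^sub>R Qmap H X) $ i $ k = (\<Sum>g\<in>?P. perm_act g (Mmap H e (perm_act (inv g) X))) $ i $ k"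
      by (rule e2)
  qed
qed

lemma card_set_mset_le: "card (set_mset M) \<le> size M"
  by (induction M) (auto simp: card_insert_if)

lemma exists_graph:
  fixes i k :: "'n::finite" and M :: "('n \<times> 'n) multiset"
  assumes sz: "size M \<le> d"
  shows "\<exists>H'\<in>Bset CARD('n) d. \<exists>j\<in>Jset H' i k. img j (edges H') = M"
proof -
  let ?S = "set_mset M"
  let ?U = "{i, k} \<union> fst ` ?S \<union> snd ` ?S"
  let ?m = "card ?U"
  have finU: "finite ?U" by simp
  obtain phi where phi: "bij_betw phi {0..<?m} ?U" using ex_bij_betw_nat_finite[OF finU] by blast
  let ?psi = "inv_into {0..<?m} phi"
  have psiU: "?psi u \<in> {0..<?m}" if "u \<in> ?U" for u
    using bij_betwE[OF bij_betw_inv_into[OF phi]] that by blast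
  have phipsi: "phi (?psi u) = u" if "u \<in> ?U" for u
    by (rule bij_betw_inv_into_right[OF phi that])
  have psiphi: "?psi (phi v) = v" if "v \<in> {0..<?m}" for v
    by (rule bij_betw_inv_into_left[OF phi that])
  have phiV: "phi v \<in> ?U" if "v \<in> {0..<?m}" for v using bij_betwE[OF phi] that by blast
  define H' where "H' = MG ?m (image_mset (map_prod ?psi ?psi) M) (?psi i) (?psi k)"
  have inM: "fst x \<in> ?U" "snd x \<in> ?U" if "x \<in># M" for x using that by blast+
  have ed: "fst y < ?m \<and> snd y < ?m" if "y \<in># image_mset (map_prod ?psi ?psi) M" for y
  proof -
    obtain x where x: "x \<in># M" "y = map_prod ?psi ?psi x" using \<open>y \<in># _\<close> by auto
    then show ?thesis using psiU[OF inM(1)[OF x(1)]] psiU[OF inM(2)[OF x(1)]] by (cases x) auto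
  qed
  have wf: "wf_mgraph H'"
    unfolding wf_mgraph_def H'_def mgraph.sel using psiU ed by (auto simp: case_prod_beta)
  have c1: "?m \<le> CARD('n)" by (rule card_mono) auto
  have u1: "card ?U \<le> card ({i,k} \<union> fst`?S) + card (snd`?S)" by (rule card_Un_le)
  have u2: "card ({i,k} \<union> fst`?S) \<le> card {i,k} + card (fst`?S)" by (rule card_Un_le)
  have u3: "card {i,k} \<le> 2" by (simp add: card_insert_if)
  have u4: "card (fst`?S) \<le> card ?S" by (rule card_image_le) simp
  have u5: "card (snd`?S) \<le> card ?S" by (rule card_image_le) simp
  have u6: "card ?S \<le> size M" by (rule card_set_mset_le)
  have c2: "?m \<le> 2 + 2 * d" using u1 u2 u3 u4 u5 u6 sz by linarith
  have noiso: "\<not> isolated H' v" if v: "v < nodes H'" "v \<noteq> out_a H'" "v \<noteq> out_b H'" for v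
  proof -
    have vV: "v \<in> {0..<?m}" using v unfolding H'_def by simp
    have "phi v \<noteq> i" using v psiphi vV unfolding H'_def by auto
    moreover have "phi v \<noteq> k" using v psiphi vV unfolding H'_def by auto
    ultimately have "phi v \<in> fst ` ?S \<union> snd ` ?S" using phiV[OF vV] by blast
    then obtain x where x: "x \<in># M" "phi v = fst x \<or> phi v = snd x" by auto
    define y where "y = map_prod ?psi ?psi x"
    have y1: "y \<in># edges H'" unfolding H'_def y_def using x(1) by simp
    have y2: "fst y = v \<or> snd y = v"
      unfolding y_def using x(2) psiphi[OF vV] by (cases x) auto
    show ?thesis unfolding isolated_def
    proof
      assume "\<forall>(r, s)\<in>#edges H'. r \<noteq> v \<and> s \<noteq> v"
      then have "fst y \<noteq> v \<and> snd y \<noteq> v" using y1 by (cases y) auto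
      then show False using y2 by blast
    qed
  qed
  have "H' \<in> Bset CARD('n) d"
    unfolding Bset_def using wf c1 c2 sz noiso by (auto simp: H'_def)
  moreover have "restrict phi {0..<?m} \<in> Jset H' i k"
  proof -
    have "inj_on (restrict phi {0..<?m}) {0..<?m}" using phi unfolding bij_betw_def by (simp add: inj_on_def)
    moreover have "restrict phi {0..<?m} (?psi i) = i" "restrict phi {0..<?m} (?psi k) = k"
      using psiU phipsi by auto
    ultimately show ?thesis unfolding Jset_def H'_def by simp
  qed
  moreover have "img (restrict phi {0..<?m}) (edges H') = M"
  proof -
    have "img (restrict phi {0..<?m}) (edges H') = image_mset (map_prod (restrict phi {0..<?m}) (restrict phi {0..<?m}) \<circ> map_prod ?psi ?psi) M"
      unfolding img_def H'_def by (simp add: multiset.map_comp)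
    also have "\<dots> = image_mset id M"
    proof (rule image_mset_cong)
      fix x assume xM: "x \<in># M"
      obtain a b where x: "x = (a, b)" by (cases x)
      have aU: "a \<in> ?U" and bU: "b \<in> ?U" using inM[OF xM] x by auto
      show "(map_prod (restrict phi {0..<?m}) (restrict phi {0..<?m}) \<circ> map_prod ?psi ?psi) x = id x"
        using psiU[OF aU] psiU[OF bU] phipsi[OF aU] phipsi[OF bU] x by simp
    qed
    finally show ?thesis by simp
  qed
  ultimately show ?thesis by blast
qed



lemma coeff_inv:
  fixes P :: "real^'n::finite^'n \<Rightarrow> real^'n^'n" and C :: "'n \<Rightarrow> 'n \<Rightarrow> ('n \<times> 'n) multiset \<Rightarrow> real"
  assumes eqv: "equivariant P"
    and C: "\<And>i k X. P X $ i $ k = (\<Sum>M\<in>{M. size M \<le> d}. C i k M * monomial M X)"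
    and g: "g permutes UNIV" and M: "size M \<le> d"
  shows "C (g i) (g k) (image_mset (map_prod g g) M) = C i k M"
proof -
  let ?T = "{M :: ('n \<times> 'n) multiset. size M \<le> d}"
  let ?gM = "\<lambda>M. image_mset (map_prod g g) M"
  let ?iM = "\<lambda>M. image_mset (map_prod (inv g) (inv g)) M"
  have ig1: "inv g (g x) = x" for x using permutes_inverses(2)[OF g] .
  have ig2: "g (inv g x) = x" for x using permutes_inverses(1)[OF g] .
  have gi1: "?gM (?iM M) = M" for M
  proof -
    have "?gM (?iM M) = image_mset (map_prod g g \<circ> map_prod (inv g) (inv g)) M" by (simp add: multiset.map_comp)
    also have "\<dots> = image_mset id M" by (rule image_mset_cong) (auto simp: ig2)
    finally show ?thesis by simp
  qed
  have gi2: "?iM (?gM M) = M" for M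
  proof -
    have "?iM (?gM M) = image_mset (map_prod (inv g) (inv g) \<circ> map_prod g g) M" by (simp add: multiset.map_comp)
    also have "\<dots> = image_mset id M" by (rule image_mset_cong) (auto simp: ig1)
    finally show ?thesis by simp
  qed
  have "\<And>X. (\<Sum>M\<in>?T. (C (g i) (g k) (?gM M) - C i k M) * monomial M X) = 0"
  proof -
    fix X :: "real^'n^'n"
    have "P (perm_act g X) $ g i $ g k = perm_act g (P X) $ g i $ g k" using eqv g unfolding equivariant_def by simp
    also have "\<dots> = P X $ i $ k" by (simp add: perm_act_entry ig1)
    finally have E1: "P (perm_act g X) $ g i $ g k = P X $ i $ k" .
    have "P (perm_act g X) $ g i $ g k = (\<Sum>M\<in>?T. C (g i) (g k) M * monomial (?iM M) X)"
      unfolding C mono_perm ..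
    also have "\<dots> = (\<Sum>M\<in>?T. C (g i) (g k) (?gM M) * monomial M X)"
      by (rule sum.reindex_bij_witness[where i="?gM" and j="?iM"]) (auto simp: gi1 gi2)
    finally have E2: "P X $ i $ k = (\<Sum>M\<in>?T. C (g i) (g k) (?gM M) * monomial M X)" using E1 by simp
    have "(\<Sum>M\<in>?T. (C (g i) (g k) (?gM M) - C i k M) * monomial M X)
        = (\<Sum>M\<in>?T. C (g i) (g k) (?gM M) * monomial M X) - (\<Sum>M\<in>?T. C i k M * monomial M X)"
      by (simp add: left_diff_distrib sum_subtractf)
    also have "\<dots> = 0" using E2 C[of X i k] by simp
    finally show "(\<Sum>M\<in>?T. (C (g i) (g k) (?gM M) - C i k M) * monomial M X) = 0" .
  qed
  then have "C (g i) (g k) (?gM M) - C i k M = 0"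
    by (rule mono_indep[where a = "\<lambda>M. C (g i) (g k) (?gM M) - C i k M", OF _ M])
  then show ?thesis by simp
qed

lemma Fc_perm:
  fixes g :: "'n::finite \<Rightarrow> 'n"
  assumes g: "g permutes UNIV" and wf: "wf_mgraph H"
  shows "Fc H (g i) (g k) (image_mset (map_prod g g) M) = Fc H i k M"
proof -
  let ?h = "\<lambda>j. restrict (g \<circ> j) {0..<nodes H}"
  let ?gM = "\<lambda>M. image_mset (map_prod g g) M"
  let ?iM = "\<lambda>M. image_mset (map_prod (inv g) (inv g)) M"
  have ig1: "inv g (g x) = x" for x using permutes_inverses(2)[OF g] .
  have gi2: "?iM (?gM M) = M" for M
  proof -
    have "?iM (?gM M) = image_mset (map_prod (inv g) (inv g) \<circ> map_prod g g) M" by (simp add: multiset.map_comp)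
    also have "\<dots> = image_mset id M" by (rule image_mset_cong) (auto simp: ig1)
    finally show ?thesis by simp
  qed
  have bij: "bij_betw ?h (Jset H i k) (Jset H (g i) (g k))" by (rule Jset_perm[OF g wf])
  have imh: "img (?h j) (edges H) = ?gM (img j (edges H))" for j by (rule img_restrict[OF wf])
  let ?A = "{j \<in> Jset H i k. img j (edges H) = M}"
  let ?B = "{j \<in> Jset H (g i) (g k). img j (edges H) = ?gM M}"
  have "?B = ?h ` ?A"
  proof
    show "?h ` ?A \<subseteq> ?B" using bij imh by (auto simp: bij_betw_def)
    show "?B \<subseteq> ?h ` ?A"
    proof
      fix y assume y: "y \<in> ?B"
      then have "y \<in> ?h ` Jset H i k" using bij by (auto simp: bij_betw_def)
      then obtain x where x: "x \<in> Jset H i k" "y = ?h x" by blast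
      have "?gM (img x (edges H)) = ?gM M" using y x imh by simp
      then have "?iM (?gM (img x (edges H))) = ?iM (?gM M)" by simp
      then have "img x (edges H) = M" unfolding gi2 .
      then show "y \<in> ?h ` ?A" using x by blast
    qed
  qed
  moreover have "inj_on ?h ?A"
  proof (rule inj_on_subset)
    show "inj_on ?h (Jset H i k)" using bij by (simp add: bij_betw_def)
  qed auto
  ultimately show ?thesis unfolding Fc_def by (simp add: card_image)
qed

lemma others_zero:
  assumes RB: "R \<subseteq> Bset n d" and uq: "\<forall>H\<in>Bset n d. \<exists>!H'\<in>R. mgraph_iso H H'"
    and H1: "H1 \<in> R" and j1: "j1 \<in> Jset H1 i k" and M: "img j1 (edges H1) = M"
    and H: "H \<in> R" and ne: "H \<noteq> H1"
  shows "Fc H i (k::'n::finite) M = 0"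
proof (rule ccontr)
  assume "Fc H i k M \<noteq> 0"
  then have "Fc H i k M > 0" by simp
  then obtain j where j: "j \<in> Jset H i k" "img j (edges H) = M" using Fc_pos by blast
  have "mgraph_iso H1 H" using img_iso[of H1 n d H j1 i k j] RB H1 H j1 j M by auto
  then have "H = H1" using R_uniq[OF uq H1 RB H] by blast
  then show False using ne by blast
qed

lemma indep:
  fixes c :: "mgraph \<Rightarrow> real"
  assumes RB: "R \<subseteq> Bset CARD('n::finite) d" and uq: "\<forall>H\<in>Bset CARD('n) d. \<exists>!H'\<in>R. mgraph_iso H H'"
    and z: "\<forall>X :: real^'n^'n. (\<Sum>H\<in>R. c H *\<^sub>R Qmap H X) = 0" and H0: "H0 \<in> R"
  shows "c H0 = 0"
proof -
  let ?T = "{M :: ('n \<times> 'n) multiset. size M \<le> d}"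
  have finR: "finite R" using finite_Bset RB finite_subset by blast
  have B0: "H0 \<in> Bset CARD('n) d" using H0 RB by auto
  have nn: "nodes H0 \<le> CARD('n)" using B0 unfolding Bset_def by auto
  obtain j0 :: "nat \<Rightarrow> 'n" where j0: "j0 \<in> {0..<nodes H0} \<rightarrow>\<^sub>E UNIV" "inj_on j0 {0..<nodes H0}"
    using inj_exists[OF nn] by blast
  define i0 where "i0 = j0 (out_a H0)"
  define k0 where "k0 = j0 (out_b H0)"
  define M0 where "M0 = img j0 (edges H0)"
  have j0J: "j0 \<in> Jset H0 i0 k0" unfolding Jset_def i0_def k0_def using j0 by blast
  have szB: "size (edges H) \<le> d" if "H \<in> R" for H using that RB unfolding Bset_def by auto
  have M0sz: "size M0 \<le> d" unfolding M0_def img_def using szB[OF H0] by simp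
  have "\<And>X. (\<Sum>M\<in>?T. (\<Sum>H\<in>R. c H * real (Fc H i0 k0 M)) * monomial M X) = 0"
  proof -
    fix X :: "real^'n^'n"
    have "0 = (\<Sum>H\<in>R. c H *\<^sub>R Qmap H X) $ i0 $ k0" using z by simp
    also have "\<dots> = (\<Sum>H\<in>R. c H * Qmap H X $ i0 $ k0)" by simp
    also have "\<dots> = (\<Sum>H\<in>R. c H * (\<Sum>M\<in>?T. real (Fc H i0 k0 M) * monomial M X))"
      using Qmap_poly[OF szB] by (intro sum.cong) auto
    also have "\<dots> = (\<Sum>H\<in>R. \<Sum>M\<in>?T. c H * real (Fc H i0 k0 M) * monomial M X)"
      by (simp add: sum_distrib_left mult.assoc)
    also have "\<dots> = (\<Sum>M\<in>?T. \<Sum>H\<in>R. c H * real (Fc H i0 k0 M) * monomial M X)"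
      by (rule sum.swap)
    also have "\<dots> = (\<Sum>M\<in>?T. (\<Sum>H\<in>R. c H * real (Fc H i0 k0 M)) * monomial M X)"
      by (simp add: sum_distrib_right)
    finally show "(\<Sum>M\<in>?T. (\<Sum>H\<in>R. c H * real (Fc H i0 k0 M)) * monomial M X) = 0" by simp
  qed
  then have s0: "(\<Sum>H\<in>R. c H * real (Fc H i0 k0 M0)) = 0"
    by (rule mono_indep[OF _ M0sz])
  have "(\<Sum>H\<in>R. c H * real (Fc H i0 k0 M0)) = c H0 * real (Fc H0 i0 k0 M0) + (\<Sum>H\<in>R - {H0}. c H * real (Fc H i0 k0 M0))"
    by (rule sum.remove[OF finR H0])
  also have "(\<Sum>H\<in>R - {H0}. c H * real (Fc H i0 k0 M0)) = 0"
  proof (rule sum.neutral, rule ballI)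
    fix H assume "H \<in> R - {H0}"
    then have "Fc H i0 k0 M0 = 0" using others_zero[OF RB uq H0 j0J M0_def[symmetric]] by blast
    then show "c H * real (Fc H i0 k0 M0) = 0" by simp
  qed
  finally have "c H0 * real (Fc H0 i0 k0 M0) = 0" using s0 by simp
  moreover have "Fc H0 i0 k0 M0 > 0" using Fc_pos j0J M0_def by blast
  ultimately show ?thesis by simp
qed



lemma span:
  fixes P :: "real^'n::finite^'n \<Rightarrow> real^'n^'n"
  assumes RB: "R \<subseteq> Bset CARD('n) d" and uq: "\<forall>H\<in>Bset CARD('n) d. \<exists>!H'\<in>R. mgraph_iso H H'"
    and eqv: "equivariant P" and pm: "polymap d P"
  shows "\<exists>c. \<forall>X. P X = (\<Sum>H\<in>R. c H *\<^sub>R Qmap H X)"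
proof -
  let ?T = "{M :: ('n \<times> 'n) multiset. size M \<le> d}"
  have "\<forall>p. \<exists>c. \<forall>X. P X $ fst p $ snd p = (\<Sum>M\<in>?T. c M * monomial M X)"
    using pm unfolding polymap_def by blast
  then obtain CC where CC: "\<forall>p X. P X $ fst p $ snd p = (\<Sum>M\<in>?T. CC p M * monomial M X)"
    by metis
  define C where "C i k = CC (i, k)" for i k
  have C: "\<And>i k X. P X $ i $ k = (\<Sum>M\<in>?T. C i k M * monomial M X)"
    using CC unfolding C_def by (metis fst_conv snd_conv)
  have BR: "H \<in> Bset CARD('n) d" if "H \<in> R" for H using that RB by auto
  have wfR: "wf_mgraph H" if "H \<in> R" for H using BR[OF that] unfolding Bset_def by auto
  have szR: "size (edges H) \<le> d" if "H \<in> R" for H using BR[OF that] unfolding Bset_def by auto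
  define J0 where "J0 H = (SOME j :: nat \<Rightarrow> 'n. j \<in> {0..<nodes H} \<rightarrow>\<^sub>E UNIV \<and> inj_on j {0..<nodes H})" for H
  have J0: "J0 H \<in> Jset H (J0 H (out_a H)) (J0 H (out_b H))" if "H \<in> R" for H
  proof -
    have nn: "nodes H \<le> CARD('n)" using BR[OF that] unfolding Bset_def by auto
    have "J0 H \<in> {0..<nodes H} \<rightarrow>\<^sub>E UNIV \<and> inj_on (J0 H) {0..<nodes H}"
      unfolding J0_def by (rule someI_ex[OF inj_exists[OF nn]])
    then show ?thesis unfolding Jset_def by blast
  qed
  define cf where "cf H = C (J0 H (out_a H)) (J0 H (out_b H)) (img (J0 H) (edges H))
      / real (Fc H (J0 H (out_a H)) (J0 H (out_b H)) (img (J0 H) (edges H)))" for H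
  have finR: "finite R" using finite_Bset RB finite_subset by blast
  have key: "(\<Sum>H\<in>R. cf H * real (Fc H i k M)) = C i k M" if Msz: "size M \<le> d" for i k M
  proof -
    obtain H' j' where H': "H' \<in> Bset CARD('n) d" and j': "j' \<in> Jset H' i k" and M': "img j' (edges H') = M"
      using exists_graph[OF Msz] by blast
    obtain H1 where H1: "H1 \<in> R" and iso: "mgraph_iso H' H1" using uq H' by blast
    have wf': "wf_mgraph H'" using H' unfolding Bset_def by auto
    have "mgraph_iso H1 H'" using iso_sym[OF wf' iso] .
    then obtain f where f: "bij_betw f {0..<nodes H1} {0..<nodes H'}"
      and E: "image_mset (map_prod f f) (edges H1) = edges H'"
      and a: "f (out_a H1) = out_a H'" and b: "f (out_b H1) = out_b H'"
      unfolding mgraph_iso_def by blast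
    define j1 where "j1 = restrict (j' \<circ> f) {0..<nodes H1}"
    have bj: "bij_betw (\<lambda>j. restrict (j \<circ> f) {0..<nodes H1}) (Jset H' i k) (Jset H1 i k)"
      by (rule Jset_iso(1)[OF wfR[OF H1] f E a b])
    have j1: "j1 \<in> Jset H1 i k"
      unfolding j1_def using bij_betwE[OF bj] j' by blast
    have M1: "img j1 (edges H1) = M" unfolding j1_def Jset_iso(2)[OF wfR[OF H1] f E a b] M' ..
    have "(\<Sum>H\<in>R. cf H * real (Fc H i k M)) = cf H1 * real (Fc H1 i k M) + (\<Sum>H\<in>R - {H1}. cf H * real (Fc H i k M))"
      by (rule sum.remove[OF finR H1])
    also have "(\<Sum>H\<in>R - {H1}. cf H * real (Fc H i k M)) = 0"
    proof (rule sum.neutral, rule ballI)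
      fix H assume "H \<in> R - {H1}"
      then have "Fc H i k M = 0" using others_zero[OF RB uq H1 j1 M1] by blast
      then show "cf H * real (Fc H i k M) = 0" by simp
    qed
    finally have s1: "(\<Sum>H\<in>R. cf H * real (Fc H i k M)) = cf H1 * real (Fc H1 i k M)" by simp
    let ?j0 = "J0 H1" and ?V = "{0..<nodes H1}"
    let ?i0 = "?j0 (out_a H1)" and ?k0 = "?j0 (out_b H1)" and ?M0 = "img ?j0 (edges H1)"
    have j0J: "?j0 \<in> Jset H1 ?i0 ?k0" by (rule J0[OF H1])
    have inj0: "inj_on ?j0 ?V" and inj1: "inj_on j1 ?V" using j0J j1 unfolding Jset_def by auto
    obtain g where g: "g permutes UNIV" and gj: "\<forall>v\<in>?V. g (?j0 v) = j1 v"
      using perm_extend[OF _ inj0 inj1] by auto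
    have ab: "out_a H1 \<in> ?V" "out_b H1 \<in> ?V" using wfR[OF H1] unfolding wf_mgraph_def by auto
    have ii: "i = g ?i0" "k = g ?k0" using gj ab j1 unfolding Jset_def by auto
    have MM: "M = image_mset (map_prod g g) ?M0"
    proof -
      have "image_mset (map_prod g g) ?M0 = image_mset (map_prod g g \<circ> map_prod ?j0 ?j0) (edges H1)"
        unfolding img_def by (simp add: multiset.map_comp)
      also have "\<dots> = img j1 (edges H1)" unfolding img_def
      proof (rule image_mset_cong)
        fix x assume "x \<in># edges H1"
        then have "fst x \<in> ?V" "snd x \<in> ?V" using wf_in[OF wfR[OF H1]] by auto
        then show "(map_prod g g \<circ> map_prod ?j0 ?j0) x = map_prod j1 j1 x" using gj by (cases x) auto
      qed
      finally show ?thesis using M1 by simp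
    qed
    have F0: "Fc H1 i k M = Fc H1 ?i0 ?k0 ?M0"
      unfolding ii MM by (rule Fc_perm[OF g wfR[OF H1]])
    have M0sz: "size ?M0 \<le> d" unfolding img_def using szR[OF H1] by simp
    have C0: "C i k M = C ?i0 ?k0 ?M0"
      unfolding ii MM by (rule coeff_inv[OF eqv C g M0sz])
    have Fpos: "Fc H1 ?i0 ?k0 ?M0 > 0" using Fc_pos j0J by blast
    have "cf H1 * real (Fc H1 i k M) = C ?i0 ?k0 ?M0"
      unfolding cf_def F0 using Fpos by simp
    then show ?thesis using s1 C0 by simp
  qed
  have "P X = (\<Sum>H\<in>R. cf H *\<^sub>R Qmap H X)" for X
  proof -
    have ent: "P X $ i $ k = (\<Sum>H\<in>R. cf H *\<^sub>R Qmap H X) $ i $ k" for i k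
    proof -
      have "P X $ i $ k = (\<Sum>M\<in>?T. (\<Sum>H\<in>R. cf H * real (Fc H i k M)) * monomial M X)"
        unfolding C using key by (intro sum.cong) auto
      also have "\<dots> = (\<Sum>M\<in>?T. \<Sum>H\<in>R. cf H * real (Fc H i k M) * monomial M X)"
        by (simp add: sum_distrib_right)
      also have "\<dots> = (\<Sum>H\<in>R. \<Sum>M\<in>?T. cf H * real (Fc H i k M) * monomial M X)"
        by (rule sum.swap)
      also have "\<dots> = (\<Sum>H\<in>R. cf H * (\<Sum>M\<in>?T. real (Fc H i k M) * monomial M X))"
        by (simp add: sum_distrib_left mult.assoc)
      also have "\<dots> = (\<Sum>H\<in>R. cf H * Qmap H X $ i $ k)"
      proof (rule sum.cong[OF refl])
        fix H assume HR: "H \<in> R"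
        show "cf H * (\<Sum>M\<in>?T. real (Fc H i k M) * monomial M X) = cf H * Qmap H X $ i $ k"
          using Qmap_poly[OF szR[OF HR], of X i k] by simp
      qed
      also have "\<dots> = (\<Sum>H\<in>R. cf H *\<^sub>R Qmap H X) $ i $ k" by simp
      finally show ?thesis .
    qed
    show ?thesis
    proof (rule iffD2[OF vec_eq_iff], rule allI, rule iffD2[OF vec_eq_iff], rule allI)
      fix i k show "P X $ i $ k = (\<Sum>H\<in>R. cf H *\<^sub>R Qmap H X) $ i $ k" by (rule ent)
    qed
  qed
  then show ?thesis by blast
qed

theorem mainTheorem2:
  fixes d :: nat
  defines "n \<equiv> CARD('n::finite)"
  shows
   "(\<forall>H \<in> Bset n d. equivariant (Qmap H :: real^'n^'n \<Rightarrow> real^'n^'n) \<and> polymap d (Qmap H :: real^'n^'n \<Rightarrow> real^'n^'n))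
    \<and> (\<forall>H \<in> Bset n d. \<forall>H' \<in> Bset n d. mgraph_iso H H' \<longrightarrow>
          (Qmap H :: real^'n^'n \<Rightarrow> real^'n^'n) = Qmap H')
    \<and> (\<forall>R. R \<subseteq> Bset n d \<and> (\<forall>H \<in> Bset n d. \<exists>!H' \<in> R. mgraph_iso H H') \<longrightarrow>
          finite R
        \<and> (\<forall>c. (\<forall>X :: real^'n^'n. (\<Sum>H \<in> R. c H *\<^sub>R Qmap H X) = 0) \<longrightarrow> (\<forall>H \<in> R. c H = 0))
        \<and> (\<forall>P :: real^'n^'n \<Rightarrow> real^'n^'n. equivariant P \<and> polymap d P \<longrightarrow>
              (\<exists>c. \<forall>X. P X = (\<Sum>H \<in> R. c H *\<^sub>R Qmap H X))))
    \<and> (\<forall>H \<in> Bset n d. \<forall>e :: nat \<Rightarrow> 'n. inj_on e {0..<nodes H} \<longrightarrow>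
          (\<forall>X :: real^'n^'n. real (fact (n - nodes H)) *\<^sub>R Qmap H X
             = (\<Sum>g \<in> {g. g permutes (UNIV :: 'n set)}. perm_act g (Mmap H e (perm_act (inv g) X)))))"
proof (intro conjI)
  show "\<forall>H \<in> Bset n d. equivariant (Qmap H :: real^'n^'n \<Rightarrow> real^'n^'n) \<and> polymap d (Qmap H :: real^'n^'n \<Rightarrow> real^'n^'n)"
  proof
    fix H assume H: "H \<in> Bset n d"
    then have wf: "wf_mgraph H" and sz: "size (edges H) \<le> d" unfolding Bset_def by auto
    have "equivariant (Qmap H :: real^'n^'n \<Rightarrow> real^'n^'n)" by (rule Qmap_equiv[OF wf])
    moreover have "polymap d (Qmap H :: real^'n^'n \<Rightarrow> real^'n^'n)"
      unfolding polymap_def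
    proof (intro allI)
      fix i k :: 'n
      show "\<exists>c. \<forall>X :: real^'n^'n. Qmap H X $ i $ k = (\<Sum>M\<in>{M. size M \<le> d}. c M * monomial M X)"
        by (rule exI[of _ "\<lambda>M. real (Fc H i k M)"]) (simp add: Qmap_poly[OF sz])
    qed
    ultimately show "equivariant (Qmap H :: real^'n^'n \<Rightarrow> real^'n^'n) \<and> polymap d (Qmap H :: real^'n^'n \<Rightarrow> real^'n^'n)" ..
  qed
  show "\<forall>H \<in> Bset n d. \<forall>H' \<in> Bset n d. mgraph_iso H H' \<longrightarrow> (Qmap H :: real^'n^'n \<Rightarrow> real^'n^'n) = Qmap H'"
  proof (intro ballI impI)
    fix H H' assume H: "H \<in> Bset n d" and "H' \<in> Bset n d" and iso: "mgraph_iso H H'"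
    have wf: "wf_mgraph H" using H unfolding Bset_def by auto
    show "(Qmap H :: real^'n^'n \<Rightarrow> real^'n^'n) = Qmap H'" by (rule Qmap_iso[OF wf iso])
  qed
  show "\<forall>R. R \<subseteq> Bset n d \<and> (\<forall>H \<in> Bset n d. \<exists>!H' \<in> R. mgraph_iso H H') \<longrightarrow>
          finite R
        \<and> (\<forall>c. (\<forall>X :: real^'n^'n. (\<Sum>H \<in> R. c H *\<^sub>R Qmap H X) = 0) \<longrightarrow> (\<forall>H \<in> R. c H = 0))
        \<and> (\<forall>P :: real^'n^'n \<Rightarrow> real^'n^'n. equivariant P \<and> polymap d P \<longrightarrow>
              (\<exists>c. \<forall>X. P X = (\<Sum>H \<in> R. c H *\<^sub>R Qmap H X)))"
  proof (rule allI, rule impI, intro conjI)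
    fix R assume RR: "R \<subseteq> Bset n d \<and> (\<forall>H \<in> Bset n d. \<exists>!H' \<in> R. mgraph_iso H H')"
    then have RB: "R \<subseteq> Bset CARD('n) d" and uq: "\<forall>H\<in>Bset CARD('n) d. \<exists>!H'\<in>R. mgraph_iso H H'"
      unfolding n_def by auto
    show "finite R" using finite_Bset RB finite_subset by blast
    show "\<forall>c. (\<forall>X :: real^'n^'n. (\<Sum>H \<in> R. c H *\<^sub>R Qmap H X) = 0) \<longrightarrow> (\<forall>H \<in> R. c H = 0)"
    proof (intro allI impI ballI)
      fix c :: "mgraph \<Rightarrow> real" and H
      assume z: "\<forall>X :: real^'n^'n. (\<Sum>H \<in> R. c H *\<^sub>R Qmap H X) = 0" and H: "H \<in> R"
      show "c H = 0" by (rule indep[OF RB uq z H])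
    qed
    show "\<forall>P :: real^'n^'n \<Rightarrow> real^'n^'n. equivariant P \<and> polymap d P \<longrightarrow>
              (\<exists>c. \<forall>X. P X = (\<Sum>H \<in> R. c H *\<^sub>R Qmap H X))"
      using span[OF RB uq] by blast
  qed
  show "\<forall>H \<in> Bset n d. \<forall>e :: nat \<Rightarrow> 'n. inj_on e {0..<nodes H} \<longrightarrow>
          (\<forall>X :: real^'n^'n. real (fact (n - nodes H)) *\<^sub>R Qmap H X
             = (\<Sum>g \<in> {g. g permutes (UNIV :: 'n set)}. perm_act g (Mmap H e (perm_act (inv g) X))))"
  proof (intro ballI allI impI)
    fix H and e :: "nat \<Rightarrow> 'n" and X :: "real^'n^'n"
    assume H: "H \<in> Bset n d" and ie: "inj_on e {0..<nodes H}"
    have wf: "wf_mgraph H" using H unfolding Bset_def by auto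
    show "real (fact (n - nodes H)) *\<^sub>R Qmap H X
             = (\<Sum>g \<in> {g. g permutes (UNIV :: 'n set)}. perm_act g (Mmap H e (perm_act (inv g) X)))"
      unfolding n_def by (rule Mmap_formula[OF wf ie])
  qed
qed

end
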